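(* Let $S:\mathbb{R}^m\times\mathbb{R}^n\to\mathbb{R}^q$ be bilinear with lifted operator $\mathscr{S}$, let $\mathcal{K}'\subseteq\mathbb{R}^{m\times n}$ and $\mathcal{M}=\mathcal{K}'-\mathcal{K}'$. Let $X\in\mathcal{N}(\mathscr{S},2)\cap\mathcal{M}\setminus\{0\}$ be a given matrix and $\delta\in(0,1)$. Let $\mathbf{M}=xy^T=\sigma uv^T$ be a random rank one matrix with $u=x/\|x\|_2$, $v=y/\|y\|_2$, where $x\in\mathbb{R}^m,y\in\mathbb{R}^n$ satisfy: (A1) $x$ and $y$ each have zero mean and identity covariance; (A2) $x$ and $y$ are independent; and $\|x\|_2\ge r_x$ a.s. and $\|y\|_2\ge r_y$ a.s. for constants $r_x,r_y>0$. Then $\Pr(\|P_{\mathcal{C}(X)}u\|_2^2\ge1-\delta)\le\frac{2}{r_x^2(1-\delta)}$ and $\Pr(\|P_{\mathcal{R}(X)}v\|_2^2\ge1-\delta)\le\frac{2}{r_y^2(1-\delta)}$.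
   Context: For $j=1,\dots,q$ let $S_j$ be the unique matrix with $(S(x,y))_j=x^TS_jy$; the lifted operator is $(\mathscr{S}(W))_j=\operatorname{tr}(S_j^TW)$. $\mathcal{N}(\mathscr{S},k)=\{X:\operatorname{rank}(X)\le k,\ \mathscr{S}(X)=0\}$; $\mathcal{K}'-\mathcal{K}'=\{X_1-X_2:X_1,X_2\in\mathcal{K}'\}$. $\mathcal{C}(X)$, $\mathcal{R}(X)$ are column and row spaces; $P_{\mathcal{V}}$ is orthogonal projection onto $\mathcal{V}$. *)

theory Defs
  imports "HOL-Analysis.Analysis" "HOL-Probability.Probability"
begin

text \<open>The matrix S_j of a bilinear map S, characterised by (S(x,y))_j = x^T S_j y.\<close>
definition bilin_mat :: "(real^'m \<Rightarrow> real^'n \<Rightarrow> real^'q) \<Rightarrow> 'q \<Rightarrow> real^'n^'m" where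
  "bilin_mat S j = (\<chi> a b. (S (axis a 1) (axis b 1)) $ j)"

definition lifted_op :: "(real^'m \<Rightarrow> real^'n \<Rightarrow> real^'q) \<Rightarrow> real^'n^'m \<Rightarrow> real^'q" where
  "lifted_op S W = (\<chi> j. trace (transpose (bilin_mat S j) ** W))"

definition null_set :: "(real^'m \<Rightarrow> real^'n \<Rightarrow> real^'q) \<Rightarrow> nat \<Rightarrow> (real^'n^'m) set" where
  "null_set S k = {X. rank X \<le> k \<and> lifted_op S X = 0}"

definition set_diff_minus :: "(real^'n^'m) set \<Rightarrow> (real^'n^'m) set" where
  "set_diff_minus K = {X1 - X2 | X1 X2. X1 \<in> K \<and> X2 \<in> K}"

definition orth_proj :: "'a::real_inner set \<Rightarrow> 'a \<Rightarrow> 'a" where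
  "orth_proj V u = (THE p. p \<in> V \<and> (\<forall>w\<in>V. inner (u - p) w = 0))"

definition col_space :: "real^'n^'m \<Rightarrow> (real^'m) set" where
  "col_space X = span (columns X)"

definition row_space :: "real^'n^'m \<Rightarrow> (real^'n) set" where
  "row_space X = span (rows X)"

end

theory Submission imports Defs begin

lemma orth_proj_eq:
  fixes V :: "'a::euclidean_space set"
  assumes B: "finite B" "pairwise orthogonal B" "\<And>b. b \<in> B \<Longrightarrow> norm b = 1" "span B = V"
  shows "orth_proj V u = (\<Sum>b\<in>B. (inner u b) *\<^sub>R b)"
proof -
  define p where "p = (\<Sum>b\<in>B. (inner u b) *\<^sub>R b)"
  have "p \<in> span B" unfolding p_def
    by (intro span_sum span_scale span_base)
  then have pV: "p \<in> V" using B(4) by simp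
  have ob: "inner (u - p) b' = 0" if "b' \<in> B" for b'
  proof -
    have "inner p b' = (\<Sum>b\<in>B. inner u b * inner b b')"
      unfolding p_def by (simp add: inner_sum_left)
    also have "\<dots> = (\<Sum>b\<in>{b'}. inner u b * inner b b')"
      apply (rule sum.mono_neutral_right)
      using B(1) that apply simp_all
      using B(2) that unfolding pairwise_def orthogonal_def by blast
    also have "\<dots> = inner u b'" using B(3)[OF that] by (simp add: dot_square_norm)
    finally show ?thesis by (simp add: inner_diff_left)
  qed
  have orth: "\<forall>w\<in>V. inner (u - p) w = 0"
  proof
    fix w assume "w \<in> V"
    then have "w \<in> span B" using B(4) by simp
    then show "inner (u - p) w = 0"
    proof (induction rule: span_induct_alt)
      case base then show ?case by simp
    next
      case (step c b w) then show ?case using ob by (simp add: inner_add_right)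
    qed
  qed
  have "orth_proj V u = p"
    unfolding orth_proj_def
  proof (rule the_equality)
    show "p \<in> V \<and> (\<forall>w\<in>V. inner (u - p) w = 0)" using pV orth by blast
  next
    fix q assume q: "q \<in> V \<and> (\<forall>w\<in>V. inner (u - q) w = 0)"
    have d: "p - q \<in> V" using pV q B(4) span_diff[of p B q] by simp
    have "inner (u - q) (p - q) = 0" "inner (u - p) (p - q) = 0" using q orth d by auto
    then have "inner (p - q) (p - q) = 0" by (simp add: inner_diff_left inner_diff_right)
    then show "q = p" by simp
  qed
  then show ?thesis by (simp add: p_def)
qed

lemma norm_orth_sum:
  fixes B :: "'a::euclidean_space set"
  assumes B: "finite B" "pairwise orthogonal B" "\<And>b. b \<in> B \<Longrightarrow> norm b = 1"
  shows "(norm (\<Sum>b\<in>B. c b *\<^sub>R b))\<^sup>2 = (\<Sum>b\<in>B. (c b)\<^sup>2)"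
proof -
  have po: "pairwise (\<lambda>i j. orthogonal (c i *\<^sub>R i) (c j *\<^sub>R j)) B"
    by (rule pairwise_ortho_scaleR) (use B(2) in \<open>simp add: pairwise_def\<close>)
  show ?thesis
    using norm_sum_Pythagorean[OF B(1) po] B(3) by (simp add: power_mult_distrib)
qed

lemma main:
  fixes V :: "(real^'m) set" and x :: "'a \<Rightarrow> real^'m" and P :: "'a measure"
  assumes "subspace V" "dim V \<le> 2" "0<\<delta>" "\<delta><1" "prob_space P" and xm[measurable]: "x \<in> borel_measurable P"
  and cov: "\<And>i j. integrable P (\<lambda>\<omega>. x \<omega> $ i * x \<omega> $ j) \<and>
               (\<integral>\<omega>. x \<omega> $ i * x \<omega> $ j \<partial>P) = (if i = j then 1 else 0)"
  and "0<r" and AEr: "AE \<omega> in P. norm (x \<omega>) \<ge> r"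
  shows "measure P {\<omega>\<in>space P. (norm (orth_proj V (x \<omega> /\<^sub>R norm (x \<omega>))))\<^sup>2 \<ge> 1-\<delta>} \<le> 2/(r\<^sup>2*(1-\<delta>))"
proof -
  interpret prob_space P by fact
  obtain B where B: "B \<subseteq> V" "pairwise orthogonal B" "\<And>b. b\<in>B \<Longrightarrow> norm b = 1" "independent B" "card B = dim V" "span B = V"
    using orthonormal_basis_subspace[OF assms(1)] by metis
  have fB: "finite B" using B(4) independent_imp_finite by blast
  define u where "u \<omega> = (\<Sum>b\<in>B. (inner (x \<omega>) b)\<^sup>2)" for \<omega>
  have key: "(norm (orth_proj V z))\<^sup>2 = (\<Sum>b\<in>B. (inner z b)\<^sup>2)" for z
    using orth_proj_eq[OF fB B(2) B(3) B(6)] norm_orth_sum[OF fB B(2) B(3)] by simp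
  have ib: "integrable P (\<lambda>\<omega>. (inner (x \<omega>) b)\<^sup>2) \<and> (\<integral>\<omega>. (inner (x \<omega>) b)\<^sup>2 \<partial>P) = (norm b)\<^sup>2" for b
  proof -
    have e: "(inner (x \<omega>) b)\<^sup>2 = (\<Sum>i\<in>UNIV. \<Sum>j\<in>UNIV. (b$i * b$j) * (x \<omega> $ i * x \<omega> $ j))" for \<omega>
      by (simp add: inner_vec_def power2_eq_square sum_product algebra_simps)
    have int: "integrable P (\<lambda>\<omega>. \<Sum>i\<in>UNIV. \<Sum>j\<in>UNIV. (b$i * b$j) * (x \<omega> $ i * x \<omega> $ j))"
      apply (rule Bochner_Integration.integrable_sum, rule Bochner_Integration.integrable_sum, rule integrable_mult_right) using cov by auto
    have "(\<integral>\<omega>. (\<Sum>i\<in>UNIV. \<Sum>j\<in>UNIV. (b$i * b$j) * (x \<omega> $ i * x \<omega> $ j)) \<partial>P)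
        = (\<Sum>i\<in>UNIV. \<Sum>j\<in>UNIV. (b$i * b$j) * (if i = j then 1 else 0))"
      using cov by (simp add: integral_sum integrable_sum)
    also have "\<dots> = (\<Sum>i\<in>UNIV. b$i * b$i)"
    proof (rule sum.cong[OF refl])
      fix i :: 'm
      have "(\<Sum>j\<in>UNIV. (b$i * b$j) * (if i = j then 1 else 0)) = (\<Sum>j\<in>UNIV. (if i = j then b$i * b$j else 0))"
        by (intro sum.cong) auto
      also have "\<dots> = b$i * b$i" by (simp add: sum.delta)
      finally show "(\<Sum>j\<in>UNIV. (b$i * b$j) * (if i = j then 1 else 0)) = b$i * b$i" .
    qed
    also have "\<dots> = (norm b)\<^sup>2" by (simp add: power2_norm_eq_inner inner_vec_def)
    finally show ?thesis using int e by simp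
  qed
  have iu: "integrable P u" unfolding u_def using ib by (intro Bochner_Integration.integrable_sum) auto
  have Eu: "(\<integral>\<omega>. u \<omega> \<partial>P) = card B"
    unfolding u_def using ib B(3) by (simp add: integral_sum)
  have um[measurable]: "u \<in> borel_measurable P" using iu by (rule borel_measurable_integrable)
  define c where "c = (1-\<delta>)*r\<^sup>2"
  have c0: "c > 0" unfolding c_def using assms by simp
  let ?E = "{\<omega>\<in>space P. (norm (orth_proj V (x \<omega> /\<^sub>R norm (x \<omega>))))\<^sup>2 \<ge> 1-\<delta>}"
  let ?F = "{\<omega>\<in>space P. u \<omega> \<ge> c}"
  have Fm: "?F \<in> sets P" by measurable
  have sub: "AE \<omega> in P. \<omega> \<in> ?E \<longrightarrow> \<omega> \<in> ?F"
    using AEr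
  proof eventually_elim
    case (elim \<omega>)
    show ?case
    proof
      assume "\<omega> \<in> ?E"
      then have h: "(\<Sum>b\<in>B. (inner (x \<omega> /\<^sub>R norm (x \<omega>)) b)\<^sup>2) \<ge> 1-\<delta>" and sp: "\<omega> \<in> space P"
        using key by auto
      have nx: "norm (x \<omega>) > 0" using elim \<open>0<r\<close> by linarith
      have "(\<Sum>b\<in>B. (inner (x \<omega> /\<^sub>R norm (x \<omega>)) b)\<^sup>2) = u \<omega> / (norm (x \<omega>))\<^sup>2"
        unfolding u_def by (simp add: power_divide sum_divide_distrib power_mult_distrib field_simps)
      with h have "1-\<delta> \<le> u \<omega> / (norm (x \<omega>))\<^sup>2" by simp
      then have "u \<omega> \<ge> (1-\<delta>) * (norm (x \<omega>))\<^sup>2" using nx by (simp add: pos_le_divide_eq)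
      moreover have "(norm (x \<omega>))\<^sup>2 \<ge> r\<^sup>2" using elim \<open>0<r\<close> by (simp add: power_mono)
      ultimately have "u \<omega> \<ge> c" unfolding c_def using assms(4)
        by (smt (verit) mult_left_mono)
      then show "\<omega> \<in> ?F" using sp by simp
    qed
  qed
  have "emeasure P ?E \<le> emeasure P ?F" by (rule emeasure_mono_AE[OF sub Fm])
  then have "measure P ?E \<le> measure P ?F"
    unfolding measure_def by (intro enn2real_mono) (auto simp: less_top[symmetric])
  also have "measure P ?F \<le> (\<integral>\<omega>. u \<omega> \<partial>P) / c"
    by (rule integral_Markov_inequality_measure[OF iu Fm _ c0]) (auto simp: u_def intro!: sum_nonneg)
  also have "\<dots> \<le> 2 / c" using Eu B(5) assms(2) c0 by (simp add: divide_right_mono)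
  finally show ?thesis by (simp add: c_def mult.commute)
qed

theorem lemma2:
  fixes S :: "real^'m \<Rightarrow> real^'n \<Rightarrow> real^'q"
    and K' :: "(real^'n^'m) set"
    and X :: "real^'n^'m"
    and \<delta> r\<^sub>x r\<^sub>y :: real
    and P :: "'a measure"
    and x :: "'a \<Rightarrow> real^'m"
    and y :: "'a \<Rightarrow> real^'n"
  assumes "bilinear S"
    and "X \<in> null_set S 2 \<inter> set_diff_minus K' - {0}"
    and "0 < \<delta>" and "\<delta> < 1"
    and "prob_space P"
    and "x \<in> borel_measurable P" and "y \<in> borel_measurable P"
    and "\<And>i. integrable P (\<lambda>\<omega>. x \<omega> $ i) \<and> (\<integral>\<omega>. x \<omega> $ i \<partial>P) = 0"
    and "\<And>i j. integrable P (\<lambda>\<omega>. x \<omega> $ i * x \<omega> $ j) \<and>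
               (\<integral>\<omega>. x \<omega> $ i * x \<omega> $ j \<partial>P) = (if i = j then 1 else 0)"
    and "\<And>i. integrable P (\<lambda>\<omega>. y \<omega> $ i) \<and> (\<integral>\<omega>. y \<omega> $ i \<partial>P) = 0"
    and "\<And>i j. integrable P (\<lambda>\<omega>. y \<omega> $ i * y \<omega> $ j) \<and>
               (\<integral>\<omega>. y \<omega> $ i * y \<omega> $ j \<partial>P) = (if i = j then 1 else 0)"
    and "prob_space.indep_set P (sets (vimage_algebra (space P) x borel)) (sets (vimage_algebra (space P) y borel))"
    and "0 < r\<^sub>x" and "0 < r\<^sub>y"
    and "AE \<omega> in P. norm (x \<omega>) \<ge> r\<^sub>x"
    and "AE \<omega> in P. norm (y \<omega>) \<ge> r\<^sub>y"
  shows "measure P {\<omega> \<in> space P.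
            (norm (orth_proj (col_space X) (x \<omega> /\<^sub>R norm (x \<omega>))))\<^sup>2 \<ge> 1 - \<delta>}
           \<le> 2 / (r\<^sub>x\<^sup>2 * (1 - \<delta>))
       \<and> measure P {\<omega> \<in> space P.
            (norm (orth_proj (row_space X) (y \<omega> /\<^sub>R norm (y \<omega>))))\<^sup>2 \<ge> 1 - \<delta>}
           \<le> 2 / (r\<^sub>y\<^sup>2 * (1 - \<delta>))"
proof -
  have r: "rank X \<le> 2" using assms(2) unfolding null_set_def by auto
  have c: "dim (col_space X) \<le> 2" unfolding col_space_def using r by (simp add: dim_span column_rank_def)
  have rw: "dim (row_space X) \<le> 2" unfolding row_space_def using r by (simp add: dim_span row_rank_def)
  show ?thesis
  proof
    show "measure P {\<omega> \<in> space P.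
            (norm (orth_proj (col_space X) (x \<omega> /\<^sub>R norm (x \<omega>))))\<^sup>2 \<ge> 1 - \<delta>}
           \<le> 2 / (r\<^sub>x\<^sup>2 * (1 - \<delta>))"
      by (rule main[OF _ c assms(3,4,5,6) assms(9) assms(13,15)]) (simp add: col_space_def)
    show "measure P {\<omega> \<in> space P.
            (norm (orth_proj (row_space X) (y \<omega> /\<^sub>R norm (y \<omega>))))\<^sup>2 \<ge> 1 - \<delta>}
           \<le> 2 / (r\<^sub>y\<^sup>2 * (1 - \<delta>))"
      by (rule main[OF _ rw assms(3,4,5,7) assms(11) assms(14,16)]) (simp add: row_space_def)
  qed
qed

end
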